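(* Let $\Omega\subset\mathbb{R}^3$ be a bounded, connected Lipschitz domain and $\lambda\in\mathbb{R}$. Then $$H_0^1(\Omega)^3\cap\{\nabla\phi:\phi\in\ker(-\Delta_{\rm D}-\lambda)\}=\{0\}.$$
   Context: $-\Delta_{\rm D}$ denotes the Dirichlet Laplacian in $L^2(\Omega)$, i.e. the self-adjoint operator associated with the form $\int_\Omega\nabla\phi\cdot\nabla\psi$ on $H_0^1(\Omega)$. *)

theory Defs
  imports "HOL-Analysis.Analysis"
begin

text \<open>Points of R^3 are vectors of type real^3; functions on Omega are represented
  by functions on the whole space (only values on Omega matter).\<close>

definition partial_deriv :: "3 \<Rightarrow> (real^3 \<Rightarrow> real) \<Rightarrow> real^3 \<Rightarrow> real" where
  "partial_deriv i f = (\<lambda>x. frechet_derivative f (at x) (axis i 1))"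

fun Ck :: "nat \<Rightarrow> (real^3 \<Rightarrow> real) \<Rightarrow> bool" where
  "Ck 0 f = continuous_on UNIV f"
| "Ck (Suc k) f = (f differentiable_on UNIV \<and> (\<forall>i. Ck k (partial_deriv i f)))"

definition smooth_fun :: "(real^3 \<Rightarrow> real) \<Rightarrow> bool" where
  "smooth_fun f \<longleftrightarrow> (\<forall>k. Ck k f)"

definition test_fun :: "(real^3) set \<Rightarrow> (real^3 \<Rightarrow> real) set" where
  "test_fun \<Omega> = {f. smooth_fun f \<and> compact (closure {x. f x \<noteq> 0}) \<and> closure {x. f x \<noteq> 0} \<subseteq> \<Omega>}"

definition L2 :: "(real^3) set \<Rightarrow> (real^3 \<Rightarrow> real) \<Rightarrow> bool" where
  "L2 \<Omega> u \<longleftrightarrow> set_borel_measurable lebesgue \<Omega> u \<and> set_integrable lebesgue \<Omega> (\<lambda>x. (u x)\<^sup>2)"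

definition weak_partial :: "(real^3) set \<Rightarrow> 3 \<Rightarrow> (real^3 \<Rightarrow> real) \<Rightarrow> (real^3 \<Rightarrow> real) \<Rightarrow> bool" where
  "weak_partial \<Omega> i u g \<longleftrightarrow>
     (\<forall>\<psi>\<in>test_fun \<Omega>. (LINT x:\<Omega>|lebesgue. u x * partial_deriv i \<psi> x)
                      = - (LINT x:\<Omega>|lebesgue. g x * \<psi> x))"

definition H1 :: "(real^3) set \<Rightarrow> (real^3 \<Rightarrow> real) \<Rightarrow> (real^3 \<Rightarrow> real^3) \<Rightarrow> bool" where
  "H1 \<Omega> u Du \<longleftrightarrow> L2 \<Omega> u \<and> (\<forall>i. L2 \<Omega> (\<lambda>x. Du x $ i) \<and> weak_partial \<Omega> i u (\<lambda>x. Du x $ i))"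

definition H1_dist2 :: "(real^3) set \<Rightarrow> (real^3 \<Rightarrow> real) \<Rightarrow> (real^3 \<Rightarrow> real^3)
    \<Rightarrow> (real^3 \<Rightarrow> real) \<Rightarrow> (real^3 \<Rightarrow> real^3) \<Rightarrow> real" where
  "H1_dist2 \<Omega> u Du v Dv = (LINT x:\<Omega>|lebesgue. (u x - v x)\<^sup>2)
      + (\<Sum>i\<in>UNIV. LINT x:\<Omega>|lebesgue. (Du x $ i - Dv x $ i)\<^sup>2)"

definition H10 :: "(real^3) set \<Rightarrow> (real^3 \<Rightarrow> real) \<Rightarrow> (real^3 \<Rightarrow> real^3) \<Rightarrow> bool" where
  "H10 \<Omega> u Du \<longleftrightarrow> H1 \<Omega> u Du \<and>
     (\<exists>\<psi>::nat \<Rightarrow> real^3 \<Rightarrow> real. (\<forall>n. \<psi> n \<in> test_fun \<Omega>) \<and>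
        (\<lambda>n. H1_dist2 \<Omega> (\<psi> n) (\<lambda>x. \<chi> i. partial_deriv i (\<psi> n) x) u Du) \<longlonglongrightarrow> 0)"

text \<open>phi is in the kernel of (-Delta_D - lambda): phi belongs to the domain of the Dirichlet
  Laplacian (the operator associated with the form on H^1_0) and -Delta_D phi = lambda phi,
  i.e. phi in H^1_0 and the form identity holds against all of H^1_0.\<close>
definition dirichlet_eigen_kernel :: "(real^3) set \<Rightarrow> real \<Rightarrow> (real^3 \<Rightarrow> real) \<Rightarrow> (real^3 \<Rightarrow> real^3) \<Rightarrow> bool" where
  "dirichlet_eigen_kernel \<Omega> lam \<phi> D\<phi> \<longleftrightarrow> H10 \<Omega> \<phi> D\<phi> \<and>
     (\<forall>\<psi> D\<psi>. H10 \<Omega> \<psi> D\<psi> \<longrightarrow>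
        (LINT x:\<Omega>|lebesgue. D\<phi> x \<bullet> D\<psi> x) = lam * (LINT x:\<Omega>|lebesgue. \<phi> x * \<psi> x))"

definition lipschitz_domain :: "(real^3) set \<Rightarrow> bool" where
  "lipschitz_domain \<Omega> \<longleftrightarrow> open \<Omega> \<and>
     (\<forall>p\<in>frontier \<Omega>. \<exists>(Q :: real^3 \<Rightarrow> real^3) r h L (g :: real^2 \<Rightarrow> real).
        orthogonal_transformation Q \<and> 0 < r \<and> 0 < h \<and> L-lipschitz_on UNIV g \<and>
        (\<forall>z::real^2. norm z < r \<longrightarrow> \<bar>g z\<bar> < h) \<and>
        (\<forall>x. let y = Q (x - p); y' = (\<chi> i::2. if i = 1 then y $ 1 else y $ 2) in
              (norm y' < r \<and> \<bar>y $ 3\<bar> < h) \<longrightarrow> (x \<in> \<Omega> \<longleftrightarrow> y $ 3 < g y')))"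

end

theory Submission
  imports Defs
begin


lemma pd_eq:
  assumes "(f has_derivative f') (at x)"
  shows "partial_deriv i f x = f' (axis i 1)"
  using frechet_derivative_at[OF assms] by (simp add: partial_deriv_def)

lemma Ck_diff: "Ck (Suc k) f \<Longrightarrow> f differentiable at x"
  by (auto simp: differentiable_on_def)

lemma Ck_cont: "Ck k f \<Longrightarrow> continuous_on UNIV f"
proof (induction k arbitrary: f)
  case 0 then show ?case by simp
next
  case (Suc k) then show ?case
    by (auto intro: differentiable_imp_continuous_on)
qed

lemma Ck_Suc_imp: "Ck (Suc k) f \<Longrightarrow> Ck k f"
proof (induction k arbitrary: f)
  case 0 then show ?case by (auto intro: differentiable_imp_continuous_on)
next
  case (Suc k) then show ?case by auto
qed

lemma Ck_const0: "Ck k (\<lambda>x. 0)"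
proof (induction k)
  case 0 then show ?case by simp
next
  case (Suc k)
  have "partial_deriv i (\<lambda>x. 0) = (\<lambda>x. 0)" for i
    using pd_eq[OF has_derivative_const[of 0]] by (auto simp: fun_eq_iff)
  with Suc show ?case by simp
qed

lemma pd_add:
  assumes "f differentiable at x" "g differentiable at x"
  shows "partial_deriv i (\<lambda>x. f x + g x) x = partial_deriv i f x + partial_deriv i g x"
proof -
  obtain f' g' where f: "(f has_derivative f') (at x)" and g: "(g has_derivative g') (at x)"
    using assms by (auto simp: differentiable_def)
  show ?thesis using pd_eq[OF has_derivative_add[OF f g]] pd_eq[OF f] pd_eq[OF g] by simp
qed

lemma Ck_add: "Ck k f \<Longrightarrow> Ck k g \<Longrightarrow> Ck k (\<lambda>x. f x + g x)"
proof (induction k arbitrary: f g)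
  case 0 then show ?case by (auto intro: continuous_on_add)
next
  case (Suc k)
  have d: "(\<lambda>x. f x + g x) differentiable_on UNIV"
    using Suc.prems by (auto intro: differentiable_on_add)
  have "partial_deriv i (\<lambda>x. f x + g x) = (\<lambda>x. partial_deriv i f x + partial_deriv i g x)" for i
    using pd_add Suc.prems Ck_diff by blast
  with Suc d show ?case by auto
qed

lemma coord_deriv: "((\<lambda>x::real^3. x $ j) has_derivative (\<lambda>h. h $ j)) (at x)"
  by (rule bounded_linear_imp_has_derivative[OF bounded_linear_vec_nth])

lemma axis_nth: "(axis i (1::real)) $ j = (if j = i then 1 else 0)"
  by (simp add: axis_def)

lemma pd_mult_coord:
  assumes "f differentiable at x"
  shows "partial_deriv i (\<lambda>x. x $ j * f x) x = (if i = j then f x else 0) + x $ j * partial_deriv i f x"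
proof -
  obtain f' where f: "(f has_derivative f') (at x)" using assms by (auto simp: differentiable_def)
  show ?thesis using pd_eq[OF has_derivative_mult[OF coord_deriv f]] pd_eq[OF f]
    by (auto simp: axis_nth)
qed

lemma Ck_mult_coord: "Ck k f \<Longrightarrow> Ck k (\<lambda>x. x $ j * f x)"
proof (induction k arbitrary: f)
  case 0 then show ?case
    by (auto intro!: continuous_on_mult continuous_on_component continuous_on_id)
next
  case (Suc k)
  have d: "(\<lambda>x. x $ j * f x) differentiable_on UNIV"
  proof -
    have "(\<lambda>x. x $ j * f x) differentiable at x" for x
    proof (rule differentiable_mult)
      show "(\<lambda>x. x $ j) differentiable at x" using coord_deriv differentiable_def by blast
      show "f differentiable at x" using Suc.prems Ck_diff by blast
    qed
    then show ?thesis by (simp add: differentiable_on_def)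
  qed
  have "partial_deriv i (\<lambda>x. x $ j * f x) = (\<lambda>x. (if i = j then f x else 0) + x $ j * partial_deriv i f x)" for i
    using pd_mult_coord Suc.prems Ck_diff by blast
  moreover have "Ck k (\<lambda>x. (if i = j then f x else 0) + x $ j * partial_deriv i f x)" for i
  proof -
    have "Ck k (\<lambda>x. if i = j then f x else 0)"
      using Ck_Suc_imp[OF Suc.prems] Ck_const0 by (cases "i = j") auto
    moreover have "Ck k (\<lambda>x. x $ j * partial_deriv i f x)" using Suc by auto
    ultimately show ?thesis by (rule Ck_add)
  qed
  ultimately show ?case using d by simp
qed


lemma pd_outside:
  assumes "x \<notin> closure {y. f y \<noteq> 0}"
  shows "partial_deriv i f x = 0"
proof -
  let ?U = "- closure {y. f y \<noteq> 0}"
  have "((\<lambda>y. 0) has_derivative (\<lambda>h. 0)) (at x)" by simp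
  then have "(f has_derivative (\<lambda>h. 0)) (at x)"
  proof (rule has_derivative_transform_within_open[of _ _ _ _ ?U])
    show "x \<in> ?U" using assms by simp
    fix y assume "y \<in> ?U"
    then have "y \<notin> {y. f y \<noteq> 0}" using closure_subset[of "{y. f y \<noteq> 0}"] by blast
    then show "0 = f y" by simp
  qed (rule open_Compl, simp)
  then show ?thesis using pd_eq by simp
qed

lemma supp_compact_sub:
  fixes f g :: "real^3 \<Rightarrow> real"
  assumes "compact K" "closure {y. f y \<noteq> (0::real)} \<subseteq> K" "{y. g y \<noteq> (0::real)} \<subseteq> closure {y. f y \<noteq> 0}"
  shows "compact (closure {y. g y \<noteq> 0}) \<and> closure {y. g y \<noteq> 0} \<subseteq> closure {y. f y \<noteq> 0}"
proof -
  have s: "closure {y. g y \<noteq> 0} \<subseteq> closure {y. f y \<noteq> 0}"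
    using assms(3) closure_minimal by blast
  have "bounded (closure {y. g y \<noteq> 0})"
    using bounded_subset[OF compact_imp_bounded[OF assms(1)] order_trans[OF s assms(2)]] .
  then show ?thesis using s by (simp add: compact_eq_bounded_closed)
qed

lemma tf_pd: assumes "\<psi> \<in> test_fun \<Omega>" shows "partial_deriv i \<psi> \<in> test_fun \<Omega>"
proof -
  have "Ck k (partial_deriv i \<psi>)" for k
    using assms by (auto simp: test_fun_def smooth_fun_def dest: spec[where x="Suc k"])
  then have sm: "smooth_fun (partial_deriv i \<psi>)" by (simp add: smooth_fun_def)
  have "{y. partial_deriv i \<psi> y \<noteq> 0} \<subseteq> closure {y. \<psi> y \<noteq> 0}"
    using pd_outside by blast
  then show ?thesis using supp_compact_sub[of "closure {y. \<psi> y \<noteq> 0}" \<psi> "partial_deriv i \<psi>"] assms sm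
    by (auto simp: test_fun_def)
qed

lemma tf_coord: assumes "\<psi> \<in> test_fun \<Omega>" shows "(\<lambda>x. x $ j * \<psi> x) \<in> test_fun \<Omega>"
proof -
  have sm: "smooth_fun (\<lambda>x. x $ j * \<psi> x)"
    using assms Ck_mult_coord by (auto simp: test_fun_def smooth_fun_def)
  have "{y. y $ j * \<psi> y \<noteq> 0} \<subseteq> closure {y. \<psi> y \<noteq> 0}"
    using closure_subset by fastforce
  then show ?thesis using supp_compact_sub[of "closure {y. \<psi> y \<noteq> 0}" \<psi> "\<lambda>x. x $ j * \<psi> x"] assms sm
    by (auto simp: test_fun_def)
qed

lemma tf_pd_coord: assumes "\<psi> \<in> test_fun \<Omega>"
  shows "partial_deriv i (\<lambda>x. x $ j * \<psi> x) x = (if i = j then \<psi> x else 0) + x $ j * partial_deriv i \<psi> x"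
  using assms by (intro pd_mult_coord Ck_diff[of 0]) (auto simp: test_fun_def smooth_fun_def)

lemma tf_bounded: assumes "\<psi> \<in> test_fun \<Omega>" shows "\<exists>B. \<forall>x. \<bar>\<psi> x\<bar> \<le> B"
proof -
  let ?K = "closure {y. \<psi> y \<noteq> 0}"
  have c: "continuous_on UNIV \<psi>" using assms Ck_cont[of 0] by (auto simp: test_fun_def smooth_fun_def dest: spec[where x=0])
  have "compact (\<psi> ` ?K)" using assms c
    by (auto simp: test_fun_def intro!: compact_continuous_image continuous_on_subset[OF c])
  then obtain B where B: "\<forall>y\<in>\<psi> ` ?K. norm y \<le> B" using compact_imp_bounded bounded_iff by metis
  have "\<bar>\<psi> x\<bar> \<le> max B 0" for x
  proof (cases "x \<in> ?K")
    case True then show ?thesis using B by fastforce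
  next
    case False then have "\<psi> x = 0" using closure_subset[of "{y. \<psi> y \<noteq> 0}"] by blast
    then show ?thesis by simp
  qed
  then show ?thesis by blast
qed

lemma tf_cont: "\<psi> \<in> test_fun \<Omega> \<Longrightarrow> continuous_on UNIV \<psi>"
  using Ck_cont[of 0] by (auto simp: test_fun_def smooth_fun_def dest: spec[where x=0])



lemma line_deriv:
  fixes f :: "real^3 \<Rightarrow> real"
  assumes "f differentiable at (y + s *\<^sub>R axis i 1)"
  shows "((\<lambda>s. f (y + s *\<^sub>R axis i 1)) has_real_derivative partial_deriv i f (y + s *\<^sub>R axis i 1)) (at s)"
proof -
  obtain f' where f: "(f has_derivative f') (at (y + s *\<^sub>R axis i 1))"
    using assms by (auto simp: differentiable_def)
  have lin: "linear f'" using f has_derivative_linear by blast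
  have g: "((\<lambda>s. y + s *\<^sub>R axis i (1::real)) has_derivative (\<lambda>h. h *\<^sub>R axis i 1)) (at s)"
    by (auto intro!: derivative_eq_intros)
  have "((\<lambda>s. f (y + s *\<^sub>R axis i 1)) has_derivative (\<lambda>h. f' (h *\<^sub>R axis i 1))) (at s)"
    using has_derivative_compose[OF g f] by (simp add: o_def)
  moreover have "(\<lambda>h. f' (h *\<^sub>R axis i 1)) = (*) (f' (axis i 1))"
    using linear_scale[OF lin] by (auto simp: mult.commute)
  ultimately show ?thesis using pd_eq[OF f]
    by (simp add: has_field_derivative_def mult.commute)
qed

lemma delta_mvt:
  fixes \<psi> :: "real^3 \<Rightarrow> real"
  assumes C: "Ck 2 \<psi>" and h: "h > 0"
  shows "\<exists>\<xi> \<eta>. 0 < \<xi> \<and> \<xi> < h \<and> 0 < \<eta> \<and> \<eta> < h \<and>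
    \<psi> (x + h *\<^sub>R axis i 1 + h *\<^sub>R axis j 1) - \<psi> (x + h *\<^sub>R axis i 1) - \<psi> (x + h *\<^sub>R axis j 1) + \<psi> x
      = h * h * partial_deriv j (partial_deriv i \<psi>) (x + \<xi> *\<^sub>R axis i 1 + \<eta> *\<^sub>R axis j 1)"
proof -
  let ?ei = "axis i (1::real)" and ?ej = "axis j (1::real)"
  have d0: "\<psi> differentiable at z" for z using C by (simp add: numeral_2_eq_2 differentiable_on_def)
  have d1: "partial_deriv i \<psi> differentiable at z" for z using C by (simp add: numeral_2_eq_2 differentiable_on_def)
  define a where "a s = \<psi> ((x + h *\<^sub>R ?ej) + s *\<^sub>R ?ei) - \<psi> (x + s *\<^sub>R ?ei)" for s
  have "(a has_real_derivative
      (partial_deriv i \<psi> ((x + h *\<^sub>R ?ej) + s *\<^sub>R ?ei) - partial_deriv i \<psi> (x + s *\<^sub>R ?ei))) (at s)" for s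
    unfolding a_def by (intro DERIV_diff line_deriv d0)
  from MVT2[OF h this] obtain \<xi> where \<xi>: "0 < \<xi>" "\<xi> < h"
    and e1: "a h - a 0 = (h - 0) * (partial_deriv i \<psi> ((x + h *\<^sub>R ?ej) + \<xi> *\<^sub>R ?ei) - partial_deriv i \<psi> (x + \<xi> *\<^sub>R ?ei))"
    by blast
  define b where "b t = partial_deriv i \<psi> ((x + \<xi> *\<^sub>R ?ei) + t *\<^sub>R ?ej)" for t
  have "(b has_real_derivative partial_deriv j (partial_deriv i \<psi>) ((x + \<xi> *\<^sub>R ?ei) + t *\<^sub>R ?ej)) (at t)" for t
    unfolding b_def by (intro line_deriv d1)
  from MVT2[OF h this] obtain \<eta> where \<eta>: "0 < \<eta>" "\<eta> < h"
    and e2: "b h - b 0 = (h - 0) * partial_deriv j (partial_deriv i \<psi>) ((x + \<xi> *\<^sub>R ?ei) + \<eta> *\<^sub>R ?ej)"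
    by blast
  have "a h - a 0 = \<psi> (x + h *\<^sub>R ?ei + h *\<^sub>R ?ej) - \<psi> (x + h *\<^sub>R ?ei) - \<psi> (x + h *\<^sub>R ?ej) + \<psi> x"
    unfolding a_def by (simp add: algebra_simps)
  moreover have "b h - b 0 = partial_deriv i \<psi> ((x + h *\<^sub>R ?ej) + \<xi> *\<^sub>R ?ei) - partial_deriv i \<psi> (x + \<xi> *\<^sub>R ?ei)"
    unfolding b_def by (simp add: algebra_simps)
  ultimately have "\<psi> (x + h *\<^sub>R ?ei + h *\<^sub>R ?ej) - \<psi> (x + h *\<^sub>R ?ei) - \<psi> (x + h *\<^sub>R ?ej) + \<psi> x
      = h * h * partial_deriv j (partial_deriv i \<psi>) (x + \<xi> *\<^sub>R ?ei + \<eta> *\<^sub>R ?ej)"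
    using e1 e2 by (simp add: mult.assoc)
  then show ?thesis using \<xi> \<eta> by (rule_tac exI[of _ \<xi>], rule_tac exI[of _ \<eta>]) auto
qed

lemma clairaut:
  fixes \<psi> :: "real^3 \<Rightarrow> real"
  assumes C: "Ck 2 \<psi>"
  shows "partial_deriv j (partial_deriv i \<psi>) x = partial_deriv i (partial_deriv j \<psi>) x"
proof -
  let ?ei = "axis i (1::real)" and ?ej = "axis j (1::real)"
  define h where "h n = 1 / (real n + 1)" for n
  have hpos: "h n > 0" for n by (simp add: h_def)
  have h0: "h \<longlonglongrightarrow> 0" unfolding h_def using LIMSEQ_inverse_real_of_nat
    by (simp add: inverse_eq_divide add.commute)
  have "\<forall>n. \<exists>p. 0 < fst p \<and> fst p < h n \<and> 0 < snd p \<and> snd p < h n \<and>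
    \<psi> (x + h n *\<^sub>R ?ei + h n *\<^sub>R ?ej) - \<psi> (x + h n *\<^sub>R ?ei) - \<psi> (x + h n *\<^sub>R ?ej) + \<psi> x
      = h n * h n * partial_deriv j (partial_deriv i \<psi>) (x + fst p *\<^sub>R ?ei + snd p *\<^sub>R ?ej)"
    using delta_mvt[OF C hpos] by auto
  then obtain P where P: "\<And>n. 0 < fst (P n) \<and> fst (P n) < h n \<and> 0 < snd (P n) \<and> snd (P n) < h n \<and>
    \<psi> (x + h n *\<^sub>R ?ei + h n *\<^sub>R ?ej) - \<psi> (x + h n *\<^sub>R ?ei) - \<psi> (x + h n *\<^sub>R ?ej) + \<psi> x
      = h n * h n * partial_deriv j (partial_deriv i \<psi>) (x + fst (P n) *\<^sub>R ?ei + snd (P n) *\<^sub>R ?ej)"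
    by metis
  have "\<forall>n. \<exists>p. 0 < fst p \<and> fst p < h n \<and> 0 < snd p \<and> snd p < h n \<and>
    \<psi> (x + h n *\<^sub>R ?ej + h n *\<^sub>R ?ei) - \<psi> (x + h n *\<^sub>R ?ej) - \<psi> (x + h n *\<^sub>R ?ei) + \<psi> x
      = h n * h n * partial_deriv i (partial_deriv j \<psi>) (x + fst p *\<^sub>R ?ej + snd p *\<^sub>R ?ei)"
    using delta_mvt[OF C hpos] by auto
  then obtain Q where Q: "\<And>n. 0 < fst (Q n) \<and> fst (Q n) < h n \<and> 0 < snd (Q n) \<and> snd (Q n) < h n \<and>
    \<psi> (x + h n *\<^sub>R ?ej + h n *\<^sub>R ?ei) - \<psi> (x + h n *\<^sub>R ?ej) - \<psi> (x + h n *\<^sub>R ?ei) + \<psi> x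
      = h n * h n * partial_deriv i (partial_deriv j \<psi>) (x + fst (Q n) *\<^sub>R ?ej + snd (Q n) *\<^sub>R ?ei)"
    by metis
  have eq: "partial_deriv j (partial_deriv i \<psi>) (x + fst (P n) *\<^sub>R ?ei + snd (P n) *\<^sub>R ?ej)
      = partial_deriv i (partial_deriv j \<psi>) (x + fst (Q n) *\<^sub>R ?ej + snd (Q n) *\<^sub>R ?ei)" for n
  proof -
    have "x + h n *\<^sub>R ?ej + h n *\<^sub>R ?ei = x + h n *\<^sub>R ?ei + h n *\<^sub>R ?ej" by (simp add: algebra_simps)
    then have "h n * h n * partial_deriv j (partial_deriv i \<psi>) (x + fst (P n) *\<^sub>R ?ei + snd (P n) *\<^sub>R ?ej)
      = h n * h n * partial_deriv i (partial_deriv j \<psi>) (x + fst (Q n) *\<^sub>R ?ej + snd (Q n) *\<^sub>R ?ei)"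
      using P[of n] Q[of n] by (simp add: algebra_simps)
    then show ?thesis using hpos[of n] by simp
  qed
  have sq: "(\<lambda>n. fst (R n)) \<longlonglongrightarrow> 0" "(\<lambda>n. snd (R n)) \<longlonglongrightarrow> 0"
    if "\<And>n. 0 < fst (R n) \<and> fst (R n) < h n \<and> 0 < snd (R n) \<and> snd (R n) < h n" for R :: "nat \<Rightarrow> real \<times> real"
    using that by (auto intro!: tendsto_sandwich[OF _ _ tendsto_const h0] always_eventually less_imp_le)
  have pl: "(\<lambda>n. x + fst (R n) *\<^sub>R u + snd (R n) *\<^sub>R v) \<longlonglongrightarrow> x"
    if "(\<lambda>n. fst (R n)) \<longlonglongrightarrow> 0" "(\<lambda>n. snd (R n)) \<longlonglongrightarrow> 0" for R :: "nat \<Rightarrow> real \<times> real" and u v :: "real^3"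
    using tendsto_add[OF tendsto_add[OF tendsto_const[of x] tendsto_scaleR[OF that(1) tendsto_const[of u]]]
        tendsto_scaleR[OF that(2) tendsto_const[of v]]] by simp
  have c1: "continuous_on UNIV (partial_deriv j (partial_deriv i \<psi>))"
    and c2: "continuous_on UNIV (partial_deriv i (partial_deriv j \<psi>))"
    using C by (auto simp: numeral_2_eq_2)
  have l1: "(\<lambda>n. partial_deriv j (partial_deriv i \<psi>) (x + fst (P n) *\<^sub>R ?ei + snd (P n) *\<^sub>R ?ej))
      \<longlonglongrightarrow> partial_deriv j (partial_deriv i \<psi>) x"
    using continuous_on_tendsto_compose[OF c1 pl[OF sq[of P]]] P by auto
  have l2: "(\<lambda>n. partial_deriv i (partial_deriv j \<psi>) (x + fst (Q n) *\<^sub>R ?ej + snd (Q n) *\<^sub>R ?ei))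
      \<longlonglongrightarrow> partial_deriv i (partial_deriv j \<psi>) x"
    using continuous_on_tendsto_compose[OF c2 pl[OF sq[of Q]]] Q by auto
  show ?thesis using LIMSEQ_unique[OF l1] l2 eq by simp
qed

lemma tf_clairaut: "\<psi> \<in> test_fun \<Omega> \<Longrightarrow>
  partial_deriv j (partial_deriv i \<psi>) = partial_deriv i (partial_deriv j \<psi>)"
  by (rule ext, rule clairaut) (auto simp: test_fun_def smooth_fun_def)



definition sq :: "'a measure \<Rightarrow> ('a \<Rightarrow> real) \<Rightarrow> bool" where
  "sq M f \<longleftrightarrow> f \<in> borel_measurable M \<and> integrable M (\<lambda>x. (f x)\<^sup>2)"

lemma sq_mult_int: assumes "sq M f" "sq M g" shows "integrable M (\<lambda>x. f x * g x)"
proof (rule Bochner_Integration.integrable_bound)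
  show "integrable M (\<lambda>x. (f x)\<^sup>2 + (g x)\<^sup>2)" using assms by (auto simp: sq_def)
  show "(\<lambda>x. f x * g x) \<in> borel_measurable M" using assms by (auto simp: sq_def)
  have "\<bar>f x * g x\<bar> \<le> (f x)\<^sup>2 + (g x)\<^sup>2" for x
  proof -
    have h1: "2 * (\<bar>f x\<bar> * \<bar>g x\<bar>) \<le> (f x)\<^sup>2 + (g x)\<^sup>2"
      using sum_squares_bound[of "\<bar>f x\<bar>" "\<bar>g x\<bar>"] by (simp add: mult.assoc)
    have h2: "0 \<le> \<bar>f x\<bar> * \<bar>g x\<bar>" by simp
    have h3: "\<bar>f x * g x\<bar> = \<bar>f x\<bar> * \<bar>g x\<bar>" by (rule abs_mult)
    from h1 h2 h3 show ?thesis by linarith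
  qed
  then show "AE x in M. norm (f x * g x) \<le> norm ((f x)\<^sup>2 + (g x)\<^sup>2)" by auto
qed

lemma sq_add: assumes "sq M f" "sq M g" shows "sq M (\<lambda>x. f x + g x)"
proof -
  have "(\<lambda>x. (f x + g x)\<^sup>2) = (\<lambda>x. (f x)\<^sup>2 + (g x)\<^sup>2 + 2 * (f x * g x))"
    by (auto simp: power2_eq_square algebra_simps)
  then show ?thesis using assms sq_mult_int[OF assms] by (auto simp: sq_def)
qed

lemma sq_cmult: assumes "sq M f" shows "sq M (\<lambda>x. c * f x)"
proof -
  have "(\<lambda>x. (c * f x)\<^sup>2) = (\<lambda>x. c\<^sup>2 * (f x)\<^sup>2)" by (auto simp: power2_eq_square)
  then show ?thesis using assms by (auto simp: sq_def)
qed

lemma sq_diff: assumes "sq M f" "sq M g" shows "sq M (\<lambda>x. f x - g x)"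
  using sq_add[OF assms(1) sq_cmult[OF assms(2), of "-1"]] by simp

lemma sq_bmult: assumes "sq M f" "b \<in> borel_measurable M" "\<And>x. x \<in> space M \<Longrightarrow> \<bar>b x\<bar> \<le> C"
  shows "sq M (\<lambda>x. b x * f x)"
  unfolding sq_def
proof
  show "(\<lambda>x. b x * f x) \<in> borel_measurable M" using assms by (auto simp: sq_def)
  show "integrable M (\<lambda>x. (b x * f x)\<^sup>2)"
  proof (rule Bochner_Integration.integrable_bound)
    show "integrable M (\<lambda>x. C\<^sup>2 * (f x)\<^sup>2)" using assms by (auto simp: sq_def)
    show "(\<lambda>x. (b x * f x)\<^sup>2) \<in> borel_measurable M" using assms by (auto simp: sq_def)
    have "(b x * f x)\<^sup>2 \<le> C\<^sup>2 * (f x)\<^sup>2" if "x \<in> space M" for x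
    proof -
      have "\<bar>b x\<bar>\<^sup>2 \<le> C\<^sup>2" using power_mono[OF assms(3)[OF that] abs_ge_zero, of 2] .
      then have "(b x)\<^sup>2 \<le> C\<^sup>2" by simp
      then show ?thesis by (simp add: power_mult_distrib mult_right_mono)
    qed
    then show "AE x in M. norm ((b x * f x)\<^sup>2) \<le> norm (C\<^sup>2 * (f x)\<^sup>2)" by (auto intro!: AE_I2)
  qed
qed

lemma sq_bounded: assumes "finite_measure M" "f \<in> borel_measurable M" "\<And>x. \<bar>f x\<bar> \<le> C"
  shows "sq M f"
  unfolding sq_def
proof
  show "f \<in> borel_measurable M" by fact
  have "\<bar>(f x)\<^sup>2\<bar> \<le> C\<^sup>2" for x using power_mono[OF assms(3)[of x] abs_ge_zero, of 2] by simp
  then show "integrable M (\<lambda>x. (f x)\<^sup>2)"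
    using assms by (intro finite_measure.integrable_const_bound[where B="C\<^sup>2"]) auto
qed

lemma CS: assumes "sq M f" "sq M g"
  shows "(\<integral>x. f x * g x \<partial>M)\<^sup>2 \<le> (\<integral>x. (f x)\<^sup>2 \<partial>M) * (\<integral>x. (g x)\<^sup>2 \<partial>M)"
proof -
  let ?A = "\<integral>x. (f x)\<^sup>2 \<partial>M" and ?B = "\<integral>x. (g x)\<^sup>2 \<partial>M" and ?C = "\<integral>x. f x * g x \<partial>M"
  have fg: "integrable M (\<lambda>x. f x * g x)" by (rule sq_mult_int[OF assms])
  have q: "0 \<le> ?A + 2 * t * ?C + t\<^sup>2 * ?B" for t
  proof -
    have "0 \<le> (\<integral>x. (f x + t * g x)\<^sup>2 \<partial>M)" by simp
    also have "(\<lambda>x. (f x + t * g x)\<^sup>2) = (\<lambda>x. (f x)\<^sup>2 + (2 * t) * (f x * g x) + t\<^sup>2 * (g x)\<^sup>2)"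
      by (auto simp: power2_eq_square algebra_simps)
    also have "(\<integral>x. (f x)\<^sup>2 + (2 * t) * (f x * g x) + t\<^sup>2 * (g x)\<^sup>2 \<partial>M) = ?A + 2 * t * ?C + t\<^sup>2 * ?B"
      using assms fg by (simp add: sq_def)
    finally show ?thesis .
  qed
  have B0: "0 \<le> ?B" by simp
  show ?thesis
  proof (cases "?B = 0")
    case True
    have "?C = 0"
    proof (rule ccontr)
      assume "?C \<noteq> 0"
      then have "0 \<le> ?A + 2 * (- (?A + 1) / (2 * ?C)) * ?C" using q[of "- (?A + 1) / (2 * ?C)"] True by simp
      then show False using \<open>?C \<noteq> 0\<close> by (simp add: field_simps)
    qed
    then show ?thesis using True by simp
  next
    case False
    then have Bp: "?B > 0" using B0 by linarith
    have "0 \<le> ?A + 2 * (- ?C / ?B) * ?C + (- ?C / ?B)\<^sup>2 * ?B" by (rule q)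
    also have "\<dots> = ?A - ?C\<^sup>2 / ?B" using Bp by (simp add: power2_eq_square field_simps)
    finally have "?C\<^sup>2 / ?B \<le> ?A" by simp
    then show ?thesis using Bp by (simp add: field_simps)
  qed
qed

lemma sq_lim:
  assumes u: "sq M u" and g: "sq M g" and \<psi>: "\<And>n. sq M (\<psi> n)"
    and c: "(\<lambda>n. \<integral>x. (\<psi> n x - u x)\<^sup>2 \<partial>M) \<longlonglongrightarrow> 0"
  shows "(\<lambda>n. \<integral>x. \<psi> n x * g x \<partial>M) \<longlonglongrightarrow> (\<integral>x. u x * g x \<partial>M)"
proof -
  define I where "I n = (\<integral>x. (\<psi> n x - u x) * g x \<partial>M)" for n
  define A where "A n = (\<integral>x. (\<psi> n x - u x)\<^sup>2 \<partial>M)" for n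
  define B where "B = (\<integral>x. (g x)\<^sup>2 \<partial>M)"
  have d: "(\<integral>x. \<psi> n x * g x \<partial>M) - (\<integral>x. u x * g x \<partial>M) = I n" for n
    unfolding I_def using sq_mult_int[OF \<psi> g] sq_mult_int[OF u g] by (simp add: left_diff_distrib)
  have b: "(I n)\<^sup>2 \<le> A n * B" for n
    unfolding I_def A_def B_def using CS[OF sq_diff[OF \<psi> u] g] .
  have AB: "(\<lambda>n. A n * B) \<longlonglongrightarrow> 0 * B"
    using c unfolding A_def by (intro tendsto_mult tendsto_const)
  have "(\<lambda>n. (I n)\<^sup>2) \<longlonglongrightarrow> 0"
  proof (rule tendsto_sandwich[where f="\<lambda>n. 0" and h="\<lambda>n. A n * B"])
    show "\<forall>\<^sub>F n in sequentially. 0 \<le> (I n)\<^sup>2" by simp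
    show "\<forall>\<^sub>F n in sequentially. (I n)\<^sup>2 \<le> A n * B" using b by simp
    show "(\<lambda>n. A n * B) \<longlonglongrightarrow> 0" using AB by simp
  qed simp
  then have "(\<lambda>n. sqrt ((I n)\<^sup>2)) \<longlonglongrightarrow> sqrt 0" by (rule tendsto_real_sqrt)
  then have "(\<lambda>n. \<bar>I n\<bar>) \<longlonglongrightarrow> 0" by simp
  then have "I \<longlonglongrightarrow> 0" by (simp add: tendsto_rabs_zero_iff)
  then have "(\<lambda>n. (\<integral>x. \<psi> n x * g x \<partial>M) - (\<integral>x. u x * g x \<partial>M)) \<longlonglongrightarrow> 0" using d by simp
  then show ?thesis by (simp add: LIM_zero_iff)
qed



locale dom =
  fixes \<Omega> :: "(real^3) set"
  assumes op: "open \<Omega>" and bd: "bounded \<Omega>"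
begin

abbreviation "M \<equiv> lebesgue_on \<Omega>"

lemma Om_lmeas: "\<Omega> \<in> lmeasurable" using lmeasurable_open[OF bd op] .
lemma Om_sets: "\<Omega> \<in> sets lebesgue" using Om_lmeas by auto
lemma fin: "finite_measure M" using finite_measure_lebesgue_on[OF Om_lmeas] .
lemma Om_sets': "\<Omega> \<inter> space lebesgue \<in> sets lebesgue" using Om_sets by simp

lemma LINT_conv: "(LINT x:\<Omega>|lebesgue. (f::real^3\<Rightarrow>real) x) = integral\<^sup>L M f"
  unfolding set_lebesgue_integral_def using integral_restrict_space[OF Om_sets', of f] by simp

lemma SI_conv: "set_integrable lebesgue \<Omega> (f::real^3\<Rightarrow>real) \<longleftrightarrow> integrable M f"
  by (rule set_integrable_eq[OF Om_sets'])

lemma SM_conv: "set_borel_measurable lebesgue \<Omega> (f::real^3\<Rightarrow>real) \<longleftrightarrow> f \<in> borel_measurable M"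
  unfolding set_borel_measurable_def using borel_measurable_restrict_space_iff[OF Om_sets', of f] by simp

lemma L2_sq: "L2 \<Omega> u \<longleftrightarrow> sq M u"
  by (simp add: L2_def sq_def SI_conv SM_conv)

lemma cont_meas: "continuous_on UNIV f \<Longrightarrow> f \<in> borel_measurable M"
  using continuous_imp_measurable_on_sets_lebesgue[OF continuous_on_subset[OF _ subset_UNIV] Om_sets] .

lemma tf_sq: "\<psi> \<in> test_fun \<Omega> \<Longrightarrow> sq M \<psi>"
proof -
  assume t: "\<psi> \<in> test_fun \<Omega>"
  obtain B where "\<And>x. \<bar>\<psi> x\<bar> \<le> B" using tf_bounded[OF t] by blast
  then show ?thesis using sq_bounded[OF fin cont_meas[OF tf_cont[OF t]]] by blast
qed

lemma tf_pd_sq: "\<psi> \<in> test_fun \<Omega> \<Longrightarrow> sq M (partial_deriv i \<psi>)"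
  using tf_sq tf_pd by blast

lemma coord_bound: "\<exists>C. \<forall>x\<in>\<Omega>. \<bar>x $ j\<bar> \<le> C"
proof -
  obtain a where a: "\<forall>x\<in>\<Omega>. norm x \<le> a" using bd bounded_iff by blast
  have "\<bar>x $ j\<bar> \<le> a" if "x \<in> \<Omega>" for x using order_trans[OF component_le_norm_cart[of x j] a[rule_format, OF that]] .
  then show ?thesis by blast
qed

lemma coord_meas: "(\<lambda>x. x $ j) \<in> borel_measurable M"
  by (rule cont_meas) (intro continuous_intros)

lemma sq_coord: "sq M u \<Longrightarrow> sq M (\<lambda>x. x $ j * u x)"
  using coord_bound[of j] by (auto intro!: sq_bmult coord_meas)

lemma H1_D:
  assumes "H1 \<Omega> u Du"
  shows "sq M u" "sq M (\<lambda>x. Du x $ i)"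
    "\<psi> \<in> test_fun \<Omega> \<Longrightarrow> (\<integral>x. u x * partial_deriv i \<psi> x \<partial>M) = - (\<integral>x. Du x $ i * \<psi> x \<partial>M)"
  using assms by (auto simp: H1_def L2_sq weak_partial_def LINT_conv)

lemma sum_nonneg_lim:
  fixes a :: "nat \<Rightarrow> real" and b :: "nat \<Rightarrow> 3 \<Rightarrow> real"
  assumes "\<And>n. 0 \<le> a n" "\<And>n i. 0 \<le> b n i" "(\<lambda>n. a n + (\<Sum>i\<in>UNIV. b n i)) \<longlonglongrightarrow> 0"
  shows "a \<longlonglongrightarrow> 0" "(\<lambda>n. b n i) \<longlonglongrightarrow> 0"
proof -
  have s: "0 \<le> (\<Sum>i\<in>UNIV. b n i)" for n using assms(2) by (simp add: sum_nonneg)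
  show "a \<longlonglongrightarrow> 0"
  proof (rule tendsto_sandwich[where f="\<lambda>n. 0" and h="\<lambda>n. a n + (\<Sum>i\<in>UNIV. b n i)"])
    show "\<forall>\<^sub>F n in sequentially. 0 \<le> a n" using assms(1) by simp
    show "\<forall>\<^sub>F n in sequentially. a n \<le> a n + (\<Sum>i\<in>UNIV. b n i)" using s by simp
  qed (use assms(3) in simp_all)
  have le: "b n i \<le> a n + (\<Sum>i\<in>UNIV. b n i)" for n
  proof -
    have "b n i \<le> (\<Sum>i\<in>UNIV. b n i)"
      by (rule member_le_sum) (use assms(2) in simp_all)
    then show ?thesis using assms(1)[of n] by linarith
  qed
  show "(\<lambda>n. b n i) \<longlonglongrightarrow> 0"
  proof (rule tendsto_sandwich[where f="\<lambda>n. 0" and h="\<lambda>n. a n + (\<Sum>i\<in>UNIV. b n i)"])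
    show "\<forall>\<^sub>F n in sequentially. 0 \<le> b n i" using assms(2) by simp
    show "\<forall>\<^sub>F n in sequentially. b n i \<le> a n + (\<Sum>i\<in>UNIV. b n i)" using le by simp
  qed (use assms(3) in simp_all)
qed

lemma H10_D:
  assumes "H10 \<Omega> u Du"
  obtains \<psi> where "\<And>n. \<psi> n \<in> test_fun \<Omega>" "(\<lambda>n. \<integral>x. (\<psi> n x - u x)\<^sup>2 \<partial>M) \<longlonglongrightarrow> 0"
    "\<And>i. (\<lambda>n. \<integral>x. (partial_deriv i (\<psi> n) x - Du x $ i)\<^sup>2 \<partial>M) \<longlonglongrightarrow> 0"
proof -
  obtain \<psi> where t: "\<And>n. \<psi> n \<in> test_fun \<Omega>"
    and c: "(\<lambda>n. H1_dist2 \<Omega> (\<psi> n) (\<lambda>x. \<chi> i. partial_deriv i (\<psi> n) x) u Du) \<longlonglongrightarrow> 0"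
    using assms by (auto simp: H10_def)
  have e: "H1_dist2 \<Omega> (\<psi> n) (\<lambda>x. \<chi> i. partial_deriv i (\<psi> n) x) u Du =
     (\<integral>x. (\<psi> n x - u x)\<^sup>2 \<partial>M) + (\<Sum>i\<in>UNIV. \<integral>x. (partial_deriv i (\<psi> n) x - Du x $ i)\<^sup>2 \<partial>M)" for n
    by (simp add: H1_dist2_def LINT_conv)
  have c': "(\<lambda>n. (\<integral>x. (\<psi> n x - u x)\<^sup>2 \<partial>M) + (\<Sum>i\<in>UNIV. \<integral>x. (partial_deriv i (\<psi> n) x - Du x $ i)\<^sup>2 \<partial>M)) \<longlonglongrightarrow> 0"
    using c e by simp
  note r = sum_nonneg_lim[of "\<lambda>n. \<integral>x. (\<psi> n x - u x)\<^sup>2 \<partial>M" "\<lambda>n i. \<integral>x. (partial_deriv i (\<psi> n) x - Du x $ i)\<^sup>2 \<partial>M", OF _ _ c']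
  show ?thesis by (rule that[OF t r(1) r(2)]) auto
qed

lemma H10_H1: "H10 \<Omega> u Du \<Longrightarrow> H1 \<Omega> u Du" by (simp add: H10_def)

lemma ibp:
  assumes u: "H10 \<Omega> u Du" and v: "H1 \<Omega> v Dv"
  shows "(\<integral>x. u x * Dv x $ i \<partial>M) = - (\<integral>x. Du x $ i * v x \<partial>M)"
proof -
  obtain \<psi> where t: "\<And>n. \<psi> n \<in> test_fun \<Omega>" and c0: "(\<lambda>n. \<integral>x. (\<psi> n x - u x)\<^sup>2 \<partial>M) \<longlonglongrightarrow> 0"
    and c1: "\<And>i. (\<lambda>n. \<integral>x. (partial_deriv i (\<psi> n) x - Du x $ i)\<^sup>2 \<partial>M) \<longlonglongrightarrow> 0"
    using H10_D[OF u] by blast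
  note uu = H1_D[OF H10_H1[OF u]] and vv = H1_D[OF v]
  have l1: "(\<lambda>n. \<integral>x. \<psi> n x * Dv x $ i \<partial>M) \<longlonglongrightarrow> (\<integral>x. u x * Dv x $ i \<partial>M)"
    by (rule sq_lim[OF uu(1) vv(2) tf_sq[OF t] c0])
  have l2: "(\<lambda>n. \<integral>x. partial_deriv i (\<psi> n) x * v x \<partial>M) \<longlonglongrightarrow> (\<integral>x. Du x $ i * v x \<partial>M)"
    by (rule sq_lim[OF uu(2) vv(1) tf_pd_sq[OF t] c1])
  have e: "(\<integral>x. partial_deriv i (\<psi> n) x * v x \<partial>M) = - (\<integral>x. \<psi> n x * Dv x $ i \<partial>M)" for n
    using vv(3)[OF t[of n]] by (simp add: mult.commute)
  have "(\<lambda>n. - (\<integral>x. \<psi> n x * Dv x $ i \<partial>M)) \<longlonglongrightarrow> - (\<integral>x. u x * Dv x $ i \<partial>M)"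
    by (intro tendsto_minus l1)
  then have "(\<lambda>n. \<integral>x. partial_deriv i (\<psi> n) x * v x \<partial>M) \<longlonglongrightarrow> - (\<integral>x. u x * Dv x $ i \<partial>M)"
    using e by simp
  with l2 have "(\<integral>x. Du x $ i * v x \<partial>M) = - (\<integral>x. u x * Dv x $ i \<partial>M)" by (rule LIMSEQ_unique)
  then show ?thesis by simp
qed

end


context dom begin

lemma H1_I:
  assumes "sq M u" "\<And>i. sq M (\<lambda>x. Du x $ i)"
    "\<And>i \<psi>. \<psi> \<in> test_fun \<Omega> \<Longrightarrow> (\<integral>x. u x * partial_deriv i \<psi> x \<partial>M) = - (\<integral>x. Du x $ i * \<psi> x \<partial>M)"
  shows "H1 \<Omega> u Du"
  using assms by (auto simp: H1_def L2_sq weak_partial_def LINT_conv)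

lemma H10_I:
  assumes "H1 \<Omega> u Du" "\<And>n. \<psi> n \<in> test_fun \<Omega>" "(\<lambda>n. \<integral>x. (\<psi> n x - u x)\<^sup>2 \<partial>M) \<longlonglongrightarrow> 0"
    "\<And>i. (\<lambda>n. \<integral>x. (partial_deriv i (\<psi> n) x - Du x $ i)\<^sup>2 \<partial>M) \<longlonglongrightarrow> 0"
  shows "H10 \<Omega> u Du"
proof -
  have e: "H1_dist2 \<Omega> (\<psi> n) (\<lambda>x. \<chi> i. partial_deriv i (\<psi> n) x) u Du =
     (\<integral>x. (\<psi> n x - u x)\<^sup>2 \<partial>M) + (\<Sum>i\<in>UNIV. \<integral>x. (partial_deriv i (\<psi> n) x - Du x $ i)\<^sup>2 \<partial>M)" for n
    by (simp add: H1_dist2_def LINT_conv)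
  have "(\<lambda>n. (\<integral>x. (\<psi> n x - u x)\<^sup>2 \<partial>M) + (\<Sum>i\<in>UNIV. \<integral>x. (partial_deriv i (\<psi> n) x - Du x $ i)\<^sup>2 \<partial>M))
     \<longlonglongrightarrow> 0 + (\<Sum>i\<in>(UNIV::3 set). 0)"
    by (intro tendsto_add tendsto_sum assms(3,4))
  then show ?thesis using assms(1,2) e unfolding H10_def by (intro conjI exI[of _ \<psi>]) auto
qed

lemma lim_bound:
  fixes F G :: "nat \<Rightarrow> real^3 \<Rightarrow> real"
  assumes "\<And>n. integrable M (F n)" "\<And>n. integrable M (G n)"
    "\<And>n x. x \<in> space M \<Longrightarrow> 0 \<le> F n x" "\<And>n x. x \<in> space M \<Longrightarrow> F n x \<le> G n x"
    "(\<lambda>n. \<integral>x. G n x \<partial>M) \<longlonglongrightarrow> 0"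
  shows "(\<lambda>n. \<integral>x. F n x \<partial>M) \<longlonglongrightarrow> 0"
proof (rule tendsto_sandwich[where f="\<lambda>n. 0" and h="\<lambda>n. \<integral>x. G n x \<partial>M"])
  show "\<forall>\<^sub>F n in sequentially. 0 \<le> (\<integral>x. F n x \<partial>M)"
  proof (rule always_eventually, rule allI)
    fix n show "0 \<le> (\<integral>x. F n x \<partial>M)" using assms(3) by (intro integral_nonneg_AE AE_I2) auto
  qed
  show "\<forall>\<^sub>F n in sequentially. (\<integral>x. F n x \<partial>M) \<le> (\<integral>x. G n x \<partial>M)"
    using assms by (auto intro!: always_eventually integral_mono)
qed (use assms(5) in simp_all)

lemma sq_if: "sq M u \<Longrightarrow> sq M (\<lambda>x. e * u x)"
  by (rule sq_cmult)

definition cgrad :: "3 \<Rightarrow> (real^3 \<Rightarrow> real) \<Rightarrow> (real^3 \<Rightarrow> real^3) \<Rightarrow> real^3 \<Rightarrow> real^3" where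
  "cgrad j u Du = (\<lambda>x. \<chi> i. (if i = j then 1 else 0) * u x + x $ j * Du x $ i)"

lemma H1_coord:
  assumes H: "H1 \<Omega> u Du"
  shows "H1 \<Omega> (\<lambda>x. x $ j * u x) (cgrad j u Du)"
proof (rule H1_I)
  note hh = H1_D[OF H]
  show "sq M (\<lambda>x. x $ j * u x)" using sq_coord[OF hh(1)] .
  show "sq M (\<lambda>x. cgrad j u Du x $ i)" for i
    unfolding cgrad_def using sq_add[OF sq_cmult[OF hh(1)] sq_coord[OF hh(2)]] by simp
  fix i \<psi> assume t: "\<psi> \<in> test_fun \<Omega>"
  let ?e = "(if i = j then 1 else 0) :: real"
  have t': "(\<lambda>x. x $ j * \<psi> x) \<in> test_fun \<Omega>" using tf_coord[OF t] .
  have pd: "partial_deriv i (\<lambda>x. x $ j * \<psi> x) x = ?e * \<psi> x + x $ j * partial_deriv i \<psi> x" for x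
    using tf_pd_coord[OF t] by simp
  have w: "(\<integral>x. u x * partial_deriv i (\<lambda>x. x $ j * \<psi> x) x \<partial>M) = - (\<integral>x. Du x $ i * (x $ j * \<psi> x) \<partial>M)"
    using hh(3)[OF t'] .
  have i1: "integrable M (\<lambda>x. u x * \<psi> x)" using sq_mult_int[OF hh(1) tf_sq[OF t]] .
  have i2: "integrable M (\<lambda>x. (x $ j * u x) * partial_deriv i \<psi> x)"
    using sq_mult_int[OF sq_coord[OF hh(1)] tf_pd_sq[OF t]] .
  have i3: "integrable M (\<lambda>x. (x $ j * Du x $ i) * \<psi> x)"
    using sq_mult_int[OF sq_coord[OF hh(2)] tf_sq[OF t]] .
  have "(\<lambda>x. u x * partial_deriv i (\<lambda>x. x $ j * \<psi> x) x) = (\<lambda>x. ?e * (u x * \<psi> x) + (x $ j * u x) * partial_deriv i \<psi> x)"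
    by (rule ext, simp only: pd, simp add: algebra_simps)
  then have w1: "(\<integral>x. u x * partial_deriv i (\<lambda>x. x $ j * \<psi> x) x \<partial>M)
      = ?e * (\<integral>x. u x * \<psi> x \<partial>M) + (\<integral>x. (x $ j * u x) * partial_deriv i \<psi> x \<partial>M)"
    using i1 i2 by simp
  have "(\<lambda>x. cgrad j u Du x $ i * \<psi> x) = (\<lambda>x. ?e * (u x * \<psi> x) + (x $ j * Du x $ i) * \<psi> x)"
    by (auto simp: cgrad_def algebra_simps)
  then have w2: "(\<integral>x. cgrad j u Du x $ i * \<psi> x \<partial>M) = ?e * (\<integral>x. u x * \<psi> x \<partial>M) + (\<integral>x. (x $ j * Du x $ i) * \<psi> x \<partial>M)"
    using i1 i3 by simp
  have w3: "(\<integral>x. Du x $ i * (x $ j * \<psi> x) \<partial>M) = (\<integral>x. (x $ j * Du x $ i) * \<psi> x \<partial>M)"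
    by (simp add: algebra_simps)
  show "(\<integral>x. x $ j * u x * partial_deriv i \<psi> x \<partial>M) = - (\<integral>x. cgrad j u Du x $ i * \<psi> x \<partial>M)"
    using w w1 w2 w3 by linarith
qed

lemma sq2_le: "(p + q)\<^sup>2 \<le> 2 * p\<^sup>2 + 2 * (q::real)\<^sup>2"
proof -
  have "0 \<le> (p - q)\<^sup>2" by simp
  then show ?thesis by (simp add: power2_eq_square algebra_simps)
qed

lemma H10_coord:
  assumes H: "H10 \<Omega> u Du"
  shows "H10 \<Omega> (\<lambda>x. x $ j * u x) (cgrad j u Du)"
proof -
  obtain \<psi> where t: "\<And>n. \<psi> n \<in> test_fun \<Omega>" and c0: "(\<lambda>n. \<integral>x. (\<psi> n x - u x)\<^sup>2 \<partial>M) \<longlonglongrightarrow> 0"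
    and c1: "\<And>i. (\<lambda>n. \<integral>x. (partial_deriv i (\<psi> n) x - Du x $ i)\<^sup>2 \<partial>M) \<longlonglongrightarrow> 0"
    using H10_D[OF H] by blast
  note hh = H1_D[OF H10_H1[OF H]]
  obtain C where C: "\<forall>x\<in>\<Omega>. \<bar>x $ j\<bar> \<le> C" using coord_bound by blast
  have C2: "(x $ j)\<^sup>2 \<le> C\<^sup>2" if "x \<in> \<Omega>" for x
    using power_mono[OF C[rule_format, OF that] abs_ge_zero, of 2] by simp
  have sqd: "sq M (\<lambda>x. \<psi> n x - u x)" for n using sq_diff[OF tf_sq[OF t] hh(1)] .
  have sqdi: "sq M (\<lambda>x. partial_deriv i (\<psi> n) x - Du x $ i)" for n i using sq_diff[OF tf_pd_sq[OF t] hh(2)] .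
  show ?thesis
  proof (rule H10_I[OF H1_coord[OF H10_H1[OF H]], of "\<lambda>n x. x $ j * \<psi> n x"])
    show "(\<lambda>x. x $ j * \<psi> n x) \<in> test_fun \<Omega>" for n using tf_coord[OF t] .
    show "(\<lambda>n. \<integral>x. (x $ j * \<psi> n x - x $ j * u x)\<^sup>2 \<partial>M) \<longlonglongrightarrow> 0"
    proof (rule lim_bound[where G="\<lambda>n x. C\<^sup>2 * (\<psi> n x - u x)\<^sup>2"])
      show "integrable M (\<lambda>x. (x $ j * \<psi> n x - x $ j * u x)\<^sup>2)" for n
        using sq_coord[OF sqd[of n], of j] by (simp add: sq_def right_diff_distrib)
      show "integrable M (\<lambda>x. C\<^sup>2 * (\<psi> n x - u x)\<^sup>2)" for n using sqd[of n] by (simp add: sq_def)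
      show "0 \<le> (x $ j * \<psi> n x - x $ j * u x)\<^sup>2" for n x by simp
      show "(x $ j * \<psi> n x - x $ j * u x)\<^sup>2 \<le> C\<^sup>2 * (\<psi> n x - u x)\<^sup>2" if "x \<in> space M" for n x
      proof -
        have "(x $ j * \<psi> n x - x $ j * u x)\<^sup>2 = (x $ j)\<^sup>2 * (\<psi> n x - u x)\<^sup>2"
          by (simp add: power2_eq_square algebra_simps)
        also have "\<dots> \<le> C\<^sup>2 * (\<psi> n x - u x)\<^sup>2" using C2 that by (intro mult_right_mono) auto
        finally show ?thesis .
      qed
      show "(\<lambda>n. \<integral>x. C\<^sup>2 * (\<psi> n x - u x)\<^sup>2 \<partial>M) \<longlonglongrightarrow> 0"
        using tendsto_mult[OF tendsto_const[of "C\<^sup>2"] c0] by simp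
    qed
    fix i
    let ?e = "(if i = j then 1 else 0) :: real"
    have pd: "partial_deriv i (\<lambda>x. x $ j * \<psi> n x) x = ?e * \<psi> n x + x $ j * partial_deriv i (\<psi> n) x" for n x
      using tf_pd_coord[OF t] by simp
    have eqd: "partial_deriv i (\<lambda>x. x $ j * \<psi> n x) x - cgrad j u Du x $ i
       = ?e * (\<psi> n x - u x) + x $ j * (partial_deriv i (\<psi> n) x - Du x $ i)" for n x
      by (simp add: pd cgrad_def algebra_simps)
    show "(\<lambda>n. \<integral>x. (partial_deriv i (\<lambda>x. x $ j * \<psi> n x) x - cgrad j u Du x $ i)\<^sup>2 \<partial>M) \<longlonglongrightarrow> 0"
      unfolding eqd
    proof (rule lim_bound[where G="\<lambda>n x. 2 * (\<psi> n x - u x)\<^sup>2 + 2 * C\<^sup>2 * (partial_deriv i (\<psi> n) x - Du x $ i)\<^sup>2"])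
      show "integrable M (\<lambda>x. (?e * (\<psi> n x - u x) + x $ j * (partial_deriv i (\<psi> n) x - Du x $ i))\<^sup>2)" for n
        using sq_add[OF sq_cmult[OF sqd[of n], of ?e] sq_coord[OF sqdi[of i n], of j]] by (simp add: sq_def)
      show "integrable M (\<lambda>x. 2 * (\<psi> n x - u x)\<^sup>2 + 2 * C\<^sup>2 * (partial_deriv i (\<psi> n) x - Du x $ i)\<^sup>2)" for n
        using sqd[of n] sqdi[of i n] by (simp add: sq_def)
      show "0 \<le> (?e * (\<psi> n x - u x) + x $ j * (partial_deriv i (\<psi> n) x - Du x $ i))\<^sup>2" for n x by simp
      show "(?e * (\<psi> n x - u x) + x $ j * (partial_deriv i (\<psi> n) x - Du x $ i))\<^sup>2
         \<le> 2 * (\<psi> n x - u x)\<^sup>2 + 2 * C\<^sup>2 * (partial_deriv i (\<psi> n) x - Du x $ i)\<^sup>2" if "x \<in> space M" for n x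
      proof -
        have a: "(?e * (\<psi> n x - u x))\<^sup>2 \<le> (\<psi> n x - u x)\<^sup>2" by (simp add: power_mult_distrib)
        have b: "(x $ j * (partial_deriv i (\<psi> n) x - Du x $ i))\<^sup>2 \<le> C\<^sup>2 * (partial_deriv i (\<psi> n) x - Du x $ i)\<^sup>2"
          using C2 that by (simp add: power_mult_distrib mult_right_mono)
        show ?thesis using sq2_le[of "?e * (\<psi> n x - u x)" "x $ j * (partial_deriv i (\<psi> n) x - Du x $ i)"] a b
          by linarith
      qed
      have "(\<lambda>n. 2 * (\<integral>x. (\<psi> n x - u x)\<^sup>2 \<partial>M) + 2 * C\<^sup>2 * (\<integral>x. (partial_deriv i (\<psi> n) x - Du x $ i)\<^sup>2 \<partial>M))
          \<longlonglongrightarrow> 2 * 0 + 2 * C\<^sup>2 * 0"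
        by (intro tendsto_add tendsto_mult tendsto_const c0 c1)
      then show "(\<lambda>n. \<integral>x. 2 * (\<psi> n x - u x)\<^sup>2 + 2 * C\<^sup>2 * (partial_deriv i (\<psi> n) x - Du x $ i)\<^sup>2 \<partial>M) \<longlonglongrightarrow> 0"
        using sqd sqdi by (simp add: sq_def)
    qed
  qed
qed

end


context dom begin

lemma half_lemma:
  assumes H: "H10 \<Omega> u Du"
  shows "(\<integral>x. x $ j * u x * Du x $ j \<partial>M) = - (1/2) * (\<integral>x. (u x)\<^sup>2 \<partial>M)"
proof -
  note hh = H1_D[OF H10_H1[OF H]]
  have e: "(\<integral>x. u x * cgrad j u Du x $ j \<partial>M) = - (\<integral>x. Du x $ j * (x $ j * u x) \<partial>M)"
    using ibp[OF H H1_coord[OF H10_H1[OF H]]] .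
  have i1: "integrable M (\<lambda>x. (u x)\<^sup>2)" using hh(1) by (simp add: sq_def)
  have i2: "integrable M (\<lambda>x. u x * (x $ j * Du x $ j))" using sq_mult_int[OF hh(1) sq_coord[OF hh(2)]] .
  have "(\<lambda>x. u x * cgrad j u Du x $ j) = (\<lambda>x. (u x)\<^sup>2 + u x * (x $ j * Du x $ j))"
    by (rule ext) (simp add: cgrad_def power2_eq_square distrib_left)
  then have e1: "(\<integral>x. u x * cgrad j u Du x $ j \<partial>M) = (\<integral>x. (u x)\<^sup>2 \<partial>M) + (\<integral>x. u x * (x $ j * Du x $ j) \<partial>M)"
    using i1 i2 by simp
  have e2: "(\<integral>x. Du x $ j * (x $ j * u x) \<partial>M) = (\<integral>x. u x * (x $ j * Du x $ j) \<partial>M)"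
    by (simp add: algebra_simps)
  have e3: "(\<integral>x. x $ j * u x * Du x $ j \<partial>M) = (\<integral>x. u x * (x $ j * Du x $ j) \<partial>M)"
    by (simp add: algebra_simps)
  show ?thesis using e e1 e2 e3 by linarith
qed

lemma sym_test:
  assumes P: "H1 \<Omega> \<phi> G" and Gj: "\<And>j. H1 \<Omega> (\<lambda>x. G x $ j) (DG j)" and t: "\<psi> \<in> test_fun \<Omega>"
  shows "(\<integral>x. \<psi> x * DG j x $ i \<partial>M) = (\<integral>x. \<psi> x * DG i x $ j \<partial>M)"
proof -
  have a: "(\<integral>x. DG j x $ i * \<psi> x \<partial>M) = (\<integral>x. \<phi> x * partial_deriv j (partial_deriv i \<psi>) x \<partial>M)"
    using H1_D(3)[OF Gj[of j] t, of i] H1_D(3)[OF P tf_pd[OF t], of j] by simp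
  have b: "(\<integral>x. DG i x $ j * \<psi> x \<partial>M) = (\<integral>x. \<phi> x * partial_deriv i (partial_deriv j \<psi>) x \<partial>M)"
    using H1_D(3)[OF Gj[of i] t, of j] H1_D(3)[OF P tf_pd[OF t], of i] by simp
  show ?thesis using a b tf_clairaut[OF t, of j i] by (simp add: mult.commute)
qed

lemma sym_H10:
  assumes P: "H1 \<Omega> \<phi> G" and Gj: "\<And>j. H1 \<Omega> (\<lambda>x. G x $ j) (DG j)" and f: "H10 \<Omega> f Df"
  shows "(\<integral>x. f x * DG j x $ i \<partial>M) = (\<integral>x. f x * DG i x $ j \<partial>M)"
proof -
  obtain \<psi> where t: "\<And>n. \<psi> n \<in> test_fun \<Omega>" and c0: "(\<lambda>n. \<integral>x. (\<psi> n x - f x)\<^sup>2 \<partial>M) \<longlonglongrightarrow> 0"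
    using H10_D[OF f] by blast
  note ff = H1_D[OF H10_H1[OF f]]
  have l1: "(\<lambda>n. \<integral>x. \<psi> n x * DG j x $ i \<partial>M) \<longlonglongrightarrow> (\<integral>x. f x * DG j x $ i \<partial>M)"
    by (rule sq_lim[OF ff(1) H1_D(2)[OF Gj] tf_sq[OF t] c0])
  have l2: "(\<lambda>n. \<integral>x. \<psi> n x * DG i x $ j \<partial>M) \<longlonglongrightarrow> (\<integral>x. f x * DG i x $ j \<partial>M)"
    by (rule sq_lim[OF ff(1) H1_D(2)[OF Gj] tf_sq[OF t] c0])
  have "(\<lambda>n. \<integral>x. \<psi> n x * DG j x $ i \<partial>M) = (\<lambda>n. \<integral>x. \<psi> n x * DG i x $ j \<partial>M)"
    using sym_test[OF P Gj t] by simp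
  then show ?thesis using LIMSEQ_unique[OF l1] l2 by simp
qed

end


context dom begin

lemma main_dom:
  assumes P: "H10 \<Omega> \<phi> G"
    and eig: "\<And>\<psi> D\<psi>. H10 \<Omega> \<psi> D\<psi> \<Longrightarrow> (\<integral>x. G x \<bullet> D\<psi> x \<partial>M) = lam * (\<integral>x. \<phi> x * \<psi> x \<partial>M)"
    and Gj: "\<And>j. H10 \<Omega> (\<lambda>x. G x $ j) (DG j)"
  shows "AE x in M. G x = 0"
proof -
  define g where "g j x = G x $ j" for j x
  define P where "P = (\<integral>x. (\<phi> x)\<^sup>2 \<partial>M)"
  define Q where "Q = (\<Sum>j\<in>UNIV. \<integral>x. (g j x)\<^sup>2 \<partial>M)"
  have Gj': "H10 \<Omega> (g j) (DG j)" for j using Gj by (simp add: g_def[abs_def])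
  note pp = H1_D[OF H10_H1[OF P]]
  have gg2: "sq M (\<lambda>x. DG j x $ i)" for j i using H1_D(2)[OF H10_H1[OF Gj'[of j]]] .
  have sqg: "sq M (g j)" for j using pp(2) by (simp add: g_def[abs_def])
  have inner: "G x \<bullet> D x = (\<Sum>i\<in>UNIV. g i x * D x $ i)" for x D by (simp add: inner_vec_def g_def)
  have E0: "Q = lam * P"
  proof -
    have "(\<integral>x. G x \<bullet> G x \<partial>M) = lam * P" using eig[OF P] by (simp add: P_def power2_eq_square)
    moreover have "(\<integral>x. G x \<bullet> G x \<partial>M) = Q"
    proof -
      have "(\<integral>x. G x \<bullet> G x \<partial>M) = (\<integral>x. (\<Sum>i\<in>UNIV. (g i x)\<^sup>2) \<partial>M)"
        by (simp add: inner g_def power2_eq_square)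
      also have "\<dots> = (\<Sum>i\<in>UNIV. \<integral>x. (g i x)\<^sup>2 \<partial>M)"
        using sqg by (intro Bochner_Integration.integral_sum) (auto simp: sq_def)
      finally show ?thesis by (simp add: Q_def)
    qed
    ultimately show ?thesis by simp
  qed
  have Ej: "(\<integral>x. (g j x)\<^sup>2 \<partial>M) - Q / 2 = - lam * P / 2" for j
  proof -
    have H: "H10 \<Omega> (\<lambda>x. x $ j * g j x) (cgrad j (g j) (DG j))" by (rule H10_coord[OF Gj'])
    have rhs: "(\<integral>x. \<phi> x * (x $ j * g j x) \<partial>M) = - P / 2"
      using half_lemma[OF P, of j] by (simp add: P_def g_def algebra_simps)
    have trm: "(\<integral>x. g i x * cgrad j (g j) (DG j) x $ i \<partial>M)
        = (if i = j then (\<integral>x. (g j x)\<^sup>2 \<partial>M) else 0) - (1/2) * (\<integral>x. (g i x)\<^sup>2 \<partial>M)" for i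
    proof -
      let ?e = "(if i = j then 1 else 0) :: real"
      have i1: "integrable M (\<lambda>x. g i x * g j x)" using sq_mult_int[OF sqg sqg] .
      have i2: "integrable M (\<lambda>x. (x $ j * g i x) * DG j x $ i)" using sq_mult_int[OF sq_coord[OF sqg] gg2] .
      have "(\<lambda>x. g i x * cgrad j (g j) (DG j) x $ i) = (\<lambda>x. ?e * (g i x * g j x) + (x $ j * g i x) * DG j x $ i)"
        by (auto simp: cgrad_def algebra_simps)
      then have s1: "(\<integral>x. g i x * cgrad j (g j) (DG j) x $ i \<partial>M)
          = ?e * (\<integral>x. g i x * g j x \<partial>M) + (\<integral>x. (x $ j * g i x) * DG j x $ i \<partial>M)"
        using i1 i2 by simp
      have s2: "(\<integral>x. (x $ j * g i x) * DG j x $ i \<partial>M) = (\<integral>x. (x $ j * g i x) * DG i x $ j \<partial>M)"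
        by (rule sym_H10[OF H10_H1[OF P] _ H10_coord[OF Gj'[of i]]]) (rule H10_H1[OF Gj])
      have s3: "(\<integral>x. (x $ j * g i x) * DG i x $ j \<partial>M) = - (1/2) * (\<integral>x. (g i x)\<^sup>2 \<partial>M)"
        using half_lemma[OF Gj'[of i], of j] .
      show ?thesis using s1 s2 s3 by (simp add: power2_eq_square)
    qed
    have "(\<integral>x. G x \<bullet> cgrad j (g j) (DG j) x \<partial>M) = (\<Sum>i\<in>UNIV. \<integral>x. g i x * cgrad j (g j) (DG j) x $ i \<partial>M)"
      unfolding inner
    proof (rule Bochner_Integration.integral_sum)
      fix i
      have "sq M (\<lambda>x. cgrad j (g j) (DG j) x $ i)" using H1_D(2)[OF H10_H1[OF H]] .
      then show "integrable M (\<lambda>x. g i x * cgrad j (g j) (DG j) x $ i)" using sq_mult_int[OF sqg] by blast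
    qed
    also have "\<dots> = (\<Sum>i\<in>UNIV. (if i = j then (\<integral>x. (g j x)\<^sup>2 \<partial>M) else 0) - (1/2) * (\<integral>x. (g i x)\<^sup>2 \<partial>M))"
      using trm by simp
    also have "\<dots> = (\<integral>x. (g j x)\<^sup>2 \<partial>M) - Q / 2"
      by (simp add: sum_subtractf Q_def sum_divide_distrib[symmetric])
    finally have "(\<integral>x. G x \<bullet> cgrad j (g j) (DG j) x \<partial>M) = (\<integral>x. (g j x)\<^sup>2 \<partial>M) - Q / 2" .
    moreover have "(\<integral>x. G x \<bullet> cgrad j (g j) (DG j) x \<partial>M) = lam * (\<integral>x. \<phi> x * (x $ j * g j x) \<partial>M)"
      using eig[OF H] .
    ultimately show ?thesis using rhs by simp
  qed
  have "(\<Sum>j\<in>(UNIV::3 set). (\<integral>x. (g j x)\<^sup>2 \<partial>M) - Q / 2) = (\<Sum>j\<in>(UNIV::3 set). - lam * P / 2)"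
    using Ej by simp
  then have "Q - 3 * (Q / 2) = 3 * (- lam * P / 2)"
    by (simp add: sum_subtractf Q_def)
  then have lp: "lam * P = 0" unfolding E0 by (simp add: field_simps)
  have Q0: "Q = 0" using E0 lp by simp
  have nn: "0 \<le> (\<integral>x. (g j x)\<^sup>2 \<partial>M)" for j by simp
  have z: "(\<integral>x. (g j x)\<^sup>2 \<partial>M) = 0" for j
    using Q0 sum_nonneg_eq_0_iff[of UNIV "\<lambda>j. \<integral>x. (g j x)\<^sup>2 \<partial>M"] nn unfolding Q_def by simp
  have "AE x in M. (g j x)\<^sup>2 = 0" for j
    using z[of j] integral_nonneg_eq_0_iff_AE[of M "\<lambda>x. (g j x)\<^sup>2"] sqg[of j] by (simp add: sq_def)
  then have "\<forall>j\<in>UNIV. AE x in M. g j x = 0" by simp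
  then have "AE x in M. \<forall>j\<in>(UNIV::3 set). g j x = 0" by (subst AE_finite_all) auto
  then show ?thesis by eventually_elim (simp add: g_def vec_eq_iff)
qed

end


theorem mainTheorem8:
  fixes \<Omega> :: "(real^3) set" and lam :: real
    and \<phi> :: "real^3 \<Rightarrow> real" and G :: "real^3 \<Rightarrow> real^3"
    and DG :: "3 \<Rightarrow> real^3 \<Rightarrow> real^3"
  assumes "lipschitz_domain \<Omega>" and "bounded \<Omega>" and "connected \<Omega>"
    and "dirichlet_eigen_kernel \<Omega> lam \<phi> G"
    and "\<forall>j. H10 \<Omega> (\<lambda>x. G x $ j) (DG j)"
  shows "AE x in lebesgue. x \<in> \<Omega> \<longrightarrow> G x = 0"
proof -
  interpret dom \<Omega>
    using assms(1,2) by unfold_locales (auto simp: lipschitz_domain_def)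
  have P: "H10 \<Omega> \<phi> G" using assms(4) by (simp add: dirichlet_eigen_kernel_def)
  have eig: "(\<integral>x. G x \<bullet> D\<psi> x \<partial>M) = lam * (\<integral>x. \<phi> x * \<psi> x \<partial>M)" if "H10 \<Omega> \<psi> D\<psi>" for \<psi> D\<psi>
    using assms(4) that by (simp add: dirichlet_eigen_kernel_def LINT_conv)
  have "AE x in M. G x = 0"
    by (rule main_dom[OF P eig]) (use assms(5) in auto)
  then show ?thesis using AE_restrict_space_iff[OF Om_sets'] by simp
qed


end
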